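(* Let $p$ be a prime, let $\alpha$ be a nonnegative integer, and let $G$ be a finite $p$-group of order $p^{\alpha+1}$ having a cyclic subgroup of order $p^{\alpha}$. Then $n_G=\exp(G)$ if and only if either $G$ is cyclic, or $\exp(G)=p$, or ($p=2$ and) $G\cong D_{2^{\alpha+1}}=\langle x,y \mid x^{2^{\alpha}}=y^2=1,\ x^y=x^{-1}\rangle$.
   Context: For a finite group $G$ and $x\in G$, let $I_{\mathcal C}(x)=\{y\in G : \langle x,y\rangle \text{ is cyclic}\}$. For a nontrivial finite group $G$, $n_G=\max\{|I_{\mathcal C}(x)| : x\in G\setminus\{1\}\}$. $\exp(G)$ denotes the exponent of $G$. *)

theory Defs
  imports "HOL-Algebra.Algebra"
begin

definition cyclicizer :: "('a, 'b) monoid_scheme \<Rightarrow> 'a \<Rightarrow> 'a set" where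
  "cyclicizer G x = {y \<in> carrier G. cyclic_group (subgroup_generated G {x, y})}"

definition nG :: "('a, 'b) monoid_scheme \<Rightarrow> nat" where
  "nG G = Max {card (cyclicizer G x) | x. x \<in> carrier G - {\<one>\<^bsub>G\<^esub>}}"

definition group_exponent :: "('a, 'b) monoid_scheme \<Rightarrow> nat" where
  "group_exponent G = (LEAST m::nat. 0 < m \<and> (\<forall>g \<in> carrier G. g [^]\<^bsub>G\<^esub> m = \<one>\<^bsub>G\<^esub>))"

text \<open>Dihedral group of order 2n: element (a, s) stands for x^a y^s (s = True means y),
  where x has order n, y has order 2 and y x y^{-1} = x^{-1}.\<close>
definition dihedral_group :: "nat \<Rightarrow> (nat \<times> bool) monoid" where
  "dihedral_group n = \<lparr>carrier = {0..<n} \<times> UNIV,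
     monoid.mult = (\<lambda>(a, s) (b, t). ((if s then a + n - b else a + b) mod n, s \<noteq> t)),
     one = (0, False)\<rparr>"

end

theory Submission
  imports Defs "HOL-Number_Theory.Number_Theory"
begin



lemma nt_aux1:
  fixes k p :: int
  shows "p^2 dvd ((1 + k*p)^j - (1 + int j*k*p))"
proof (induction j)
  case 0 then show ?case by simp
next
  case (Suc j)
  have eq: "(1 + k*p)^Suc j - (1 + int (Suc j)*k*p)
      = (1 + k*p) * ((1 + k*p)^j - (1 + int j*k*p)) + (int j * k^2) * p^2"
    by (simp add: algebra_simps power2_eq_square)
  show ?case unfolding eq using Suc by (intro dvd_add dvd_mult) auto
qed

lemma nt_aux2:
  fixes k p :: int
  shows "p^2 dvd (2 * (\<Sum>j<n. (1 + k*p)^j) - (2 * int n + k*p*int n*(int n - 1)))"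
proof (induction n)
  case 0 then show ?case by simp
next
  case (Suc n)
  have eq: "2 * (\<Sum>j<Suc n. (1 + k*p)^j) - (2 * int (Suc n) + k*p*int (Suc n)*(int (Suc n) - 1))
     = (2 * (\<Sum>j<n. (1 + k*p)^j) - (2 * int n + k*p*int n*(int n - 1)))
       + 2 * ((1 + k*p)^n - (1 + int n*k*p))"
    by (simp add: algebra_simps)
  show ?case unfolding eq using Suc nt_aux1[of p k n] by (intro dvd_add dvd_mult) auto
qed

lemma nt_odd:
  fixes p r :: nat
  assumes p: "Factorial_Ring.prime p" and p2: "p \<noteq> 2"
    and S: "(int p)^2 dvd (\<Sum>j<p. (int r)^j)"
    and R: "int p dvd (int r)^p - 1"
  shows False
proof -
  have p0: "p > 0" using p prime_gt_0_nat by blast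
  have ndvd: "\<not> p dvd r"
  proof
    assume "p dvd r"
    then have "p dvd r^p" using p0 dvd_trans dvd_power by blast
    then have "int p dvd (int r)^p" by (metis int_dvd_int_iff of_nat_power)
    then have "int p dvd (int r)^p - ((int r)^p - 1)" using R by (rule dvd_diff)
    then have "int p dvd 1" by simp
    then show False using p by (simp add: prime_gt_1_nat)
  qed
  have f: "[r^(p-1) = 1] (mod p)" using fermat_theorem[OF p ndvd] .
  have "[r^(p-1) * r = 1 * r] (mod p)" using f by (rule cong_mult) simp
  moreover have "r^(p-1) * r = r^p" using p0
    by (metis Suc_diff_1 power_Suc2)
  ultimately have "[r^p = r] (mod p)" by simp
  then have c1: "[int r^p = int r] (mod int p)"
    by (metis cong_int_iff of_nat_power)
  have c2: "[int r^p = 1] (mod int p)" using R by (simp add: cong_iff_dvd_diff)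
  have "[int r = 1] (mod int p)" using c1 c2 cong_sym cong_trans by blast
  then have "int p dvd int r - 1" by (simp add: cong_iff_dvd_diff)
  then obtain k where k: "int r - 1 = int p * k" by (elim dvdE)
  have rk: "int r = 1 + k * int p" using k by (simp add: algebra_simps)
  have A: "(int p)^2 dvd (2 * (\<Sum>j<p. (int r)^j) - (2 * int p + k*int p*int p*(int p - 1)))"
    unfolding rk using nt_aux2 .
  have B: "(int p)^2 dvd 2 * (\<Sum>j<p. (int r)^j)" using S by simp
  have C: "(int p)^2 dvd k*int p*int p*(int p - 1)"
    by (simp add: power2_eq_square)
  have D: "(int p)^2 dvd (2 * (\<Sum>j<p. (int r)^j)) - (2 * (\<Sum>j<p. (int r)^j) - (2 * int p + k*int p*int p*(int p - 1))) - k*int p*int p*(int p - 1)"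
    by (rule dvd_diff[OF dvd_diff[OF B A] C])
  have E: "(2 * (\<Sum>j<p. (int r)^j)) - (2 * (\<Sum>j<p. (int r)^j) - (2 * int p + k*int p*int p*(int p - 1))) - k*int p*int p*(int p - 1) = 2 * int p"
    by simp
  have "(int p) * int p dvd 2 * int p" using D unfolding E by (simp add: power2_eq_square)
  then have "int p dvd 2" using p0 dvd_mult_cancel_right[of "int p" "int p" 2] by simp
  then have "p dvd 2" by (metis int_dvd_int_iff of_nat_numeral)
  then have "p = 1 \<or> p = 2" using two_is_prime_nat prime_nat_iff by blast
  then show False using p p2 by auto
qed




context group begin

lemma IC_char:
  assumes x: "x \<in> carrier G" and y: "y \<in> carrier G"
  shows "y \<in> cyclicizer G x \<longleftrightarrow> (\<exists>c\<in>carrier G. generate G {x,y} = generate G {c})"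
proof -
  let ?S = "subgroup_generated G {x,y}"
  have cS: "carrier ?S = generate G {x,y}"
    using x y by (simp add: carrier_subgroup_generated Int_absorb1)
  have gS: "group ?S" by simp
  have "cyclic_group ?S \<longleftrightarrow> (\<exists>c\<in>carrier ?S. carrier ?S = range (\<lambda>n::int. c [^]\<^bsub>?S\<^esub> n))"
    by (rule group.cyclic_group[OF gS])
  also have "\<dots> \<longleftrightarrow> (\<exists>c\<in>carrier G. generate G {x,y} = generate G {c})"
  proof
    assume "\<exists>c\<in>carrier ?S. carrier ?S = range (\<lambda>n::int. c [^]\<^bsub>?S\<^esub> n)"
    then obtain c where c: "c \<in> carrier ?S" and e: "carrier ?S = range (\<lambda>n::int. c [^]\<^bsub>?S\<^esub> n)" by blast
    have cG: "c \<in> carrier G" using c carrier_subgroup_generated_subset by blast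
    have "range (\<lambda>n::int. c [^]\<^bsub>?S\<^esub> n) = range (\<lambda>n::int. c [^] n)"
      using int_pow_subgroup_generated[OF c] by simp
    also have "\<dots> = generate G {c}" using generate_pow[OF cG] by auto
    finally show "\<exists>c\<in>carrier G. generate G {x,y} = generate G {c}" using cG e cS by auto
  next
    assume "\<exists>c\<in>carrier G. generate G {x,y} = generate G {c}"
    then obtain c where cG: "c \<in> carrier G" and e: "generate G {x,y} = generate G {c}" by blast
    have c: "c \<in> carrier ?S" using cS e generate.incl[of c "{c}" G] by auto
    have "range (\<lambda>n::int. c [^]\<^bsub>?S\<^esub> n) = range (\<lambda>n::int. c [^] n)"
      using int_pow_subgroup_generated[OF c] by simp
    also have "\<dots> = generate G {c}" using generate_pow[OF cG] by auto
    finally show "\<exists>c\<in>carrier ?S. carrier ?S = range (\<lambda>n::int. c [^]\<^bsub>?S\<^esub> n)"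
      using c e cS by auto
  qed
  finally show ?thesis using y unfolding cyclicizer_def by auto
qed

lemma IC_sub:
  assumes x: "x \<in> carrier G" and "y \<in> cyclicizer G x"
  shows "\<exists>c\<in>carrier G. x \<in> generate G {c} \<and> y \<in> generate G {c}"
proof -
  have y: "y \<in> carrier G" using assms unfolding cyclicizer_def by auto
  then obtain c where "c \<in> carrier G" "generate G {x,y} = generate G {c}"
    using IC_char assms by blast
  then show ?thesis using generate.incl[of x "{x,y}" G] generate.incl[of y "{x,y}" G] by auto
qed

lemma IC_intro:
  assumes x: "x \<in> carrier G" and y: "y \<in> carrier G" and "x \<in> generate G {y}"
  shows "y \<in> cyclicizer G x"
proof -
  have "generate G {x,y} = generate G {y}"
  proof
    show "generate G {x,y} \<subseteq> generate G {y}"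
      by (rule generate_subgroup_incl) (use assms generate.incl[of y "{y}" G] generate_is_subgroup in auto)
    show "generate G {y} \<subseteq> generate G {x,y}"
      by (rule mono_generate) auto
  qed
  then show ?thesis using IC_char assms by blast
qed

lemma IC_intro2:
  assumes x: "x \<in> carrier G" and y: "y \<in> carrier G" and "y \<in> generate G {x}"
  shows "y \<in> cyclicizer G x"
proof -
  have "generate G {x,y} = generate G {x}"
  proof
    show "generate G {x,y} \<subseteq> generate G {x}"
      by (rule generate_subgroup_incl) (use assms generate.incl[of x "{x}" G] generate_is_subgroup in auto)
    show "generate G {x} \<subseteq> generate G {x,y}"
      by (rule mono_generate) auto
  qed
  then show ?thesis using IC_char assms by blast
qed

lemma IC_carrier: "cyclicizer G x \<subseteq> carrier G"
  unfolding cyclicizer_def by auto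

end



context group begin

lemma exp_props:
  assumes fin: "finite (carrier G)"
  shows "0 < group_exponent G" "g \<in> carrier G \<Longrightarrow> g [^] group_exponent G = \<one>"
proof -
  have ex: "0 < order G \<and> (\<forall>g\<in>carrier G. g [^] order G = \<one>)"
    using fin order_gt_0_iff_finite pow_order_eq_1 by blast
  have "0 < group_exponent G \<and> (\<forall>g\<in>carrier G. g [^] group_exponent G = \<one>)"
    unfolding group_exponent_def by (rule LeastI[of _ "order G"]) (rule ex)
  then show "0 < group_exponent G" "g \<in> carrier G \<Longrightarrow> g [^] group_exponent G = \<one>" by auto
qed

lemma exp_le:
  assumes "0 < m" "\<forall>g\<in>carrier G. g [^] m = \<one>"
  shows "group_exponent G \<le> m"
  unfolding group_exponent_def by (rule Least_le) (use assms in auto)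

lemma ord_dvd_exp:
  assumes fin: "finite (carrier G)" and g: "g \<in> carrier G"
  shows "ord g dvd group_exponent G"
  using exp_props[OF fin] g pow_eq_id by blast

lemma card_gen: "g \<in> carrier G \<Longrightarrow> card (generate G {g}) = ord g"
  using generate_pow_card by simp

lemma gen_sub: "subgroup K G \<Longrightarrow> g \<in> K \<Longrightarrow> generate G {g} \<subseteq> K"
  by (rule generate_subgroup_incl) auto

lemma gen_self: "g \<in> generate G {g}"
  by (rule generate.incl) simp

lemma gen_int_pow: "g \<in> carrier G \<Longrightarrow> g [^] (k::int) \<in> generate G {g}"
  using generate_pow by auto

lemma gen_nat_pow: "g \<in> carrier G \<Longrightarrow> g [^] (k::nat) \<in> generate G {g}"
  using gen_int_pow[of g "int k"] by (simp add: int_pow_int)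

lemma gen_carrier: "g \<in> carrier G \<Longrightarrow> generate G {g} \<subseteq> carrier G"
  using generate_in_carrier[of "{g}"] by auto

lemma cyc_finite: "finite (carrier G) \<Longrightarrow> finite (cyclicizer G x)"
  using IC_carrier finite_subset by blast

lemma nG_ge:
  assumes fin: "finite (carrier G)" and x: "x \<in> carrier G" "x \<noteq> \<one>"
  shows "card (cyclicizer G x) \<le> nG G"
proof -
  have "finite {card (cyclicizer G x) | x. x \<in> carrier G - {\<one>}}"
    using fin by simp
  then show ?thesis unfolding nG_def by (rule Max_ge) (use x in auto)
qed

lemma nG_le:
  assumes fin: "finite (carrier G)" and ne: "carrier G - {\<one>} \<noteq> {}"
    and B: "\<And>x. x \<in> carrier G \<Longrightarrow> x \<noteq> \<one> \<Longrightarrow> card (cyclicizer G x) \<le> B"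
  shows "nG G \<le> B"
proof -
  have "finite {card (cyclicizer G x) | x. x \<in> carrier G - {\<one>}}"
    using fin by simp
  moreover have "{card (cyclicizer G x) | x. x \<in> carrier G - {\<one>}} \<noteq> {}" using ne by auto
  ultimately show ?thesis unfolding nG_def using B by (subst Max_le_iff) auto
qed

end



context group begin

lemma sub_cyclic:
  assumes g: "g \<in> carrier G" and x: "x \<in> generate G {g}" and y: "y \<in> generate G {g}"
  shows "\<exists>c\<in>carrier G. generate G {x,y} = generate G {c}"
proof -
  obtain a :: int where a: "x = g [^] a" using x generate_pow[OF g] by auto
  obtain b :: int where b: "y = g [^] b" using y generate_pow[OF g] by auto
  obtain u v where uv: "u * a + v * b = gcd a b" using bezout_int by blast
  define d where "d = gcd a b"
  define c where "c = g [^] d"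
  have xc: "x \<in> carrier G" "y \<in> carrier G" using a b g by auto
  have cG: "c \<in> carrier G" using g c_def by simp
  have "c = x [^] u \<otimes> y [^] v"
    unfolding c_def a b d_def using g by (simp add: int_pow_pow int_pow_mult[symmetric] uv[symmetric] mult.commute)
  moreover have "x [^] u \<in> generate G {x,y}" "y [^] v \<in> generate G {x,y}"
    using subgroup_int_pow_closed[OF generate_is_subgroup] xc generate.incl[of x "{x,y}" G] generate.incl[of y "{x,y}" G]
    by auto
  ultimately have c1: "c \<in> generate G {x,y}"
    using generate_is_subgroup[of "{x,y}"] xc subgroup.m_closed by fastforce
  have "x = c [^] (a div d)" unfolding a c_def using g by (simp add: int_pow_pow d_def)
  then have x2: "x \<in> generate G {c}" using gen_int_pow[OF cG] by simp
  have "y = c [^] (b div d)" unfolding b c_def using g by (simp add: int_pow_pow d_def)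
  then have y2: "y \<in> generate G {c}" using gen_int_pow[OF cG] by simp
  have "generate G {x,y} = generate G {c}"
  proof
    show "generate G {x, y} \<subseteq> generate G {c}"
      by (rule generate_subgroup_incl) (use x2 y2 generate_is_subgroup cG in auto)
    show "generate G {c} \<subseteq> generate G {x, y}"
      by (rule generate_subgroup_incl) (use c1 generate_is_subgroup xc in auto)
  qed
  then show ?thesis using cG by blast
qed

end



context group begin

lemma gen_one: "generate G {\<one>} = {\<one>}"
  using generate_pow[of \<one>] by auto

lemma exp_p_bound:
  assumes fin: "finite (carrier G)" and p: "Factorial_Ring.prime (p::nat)"
    and all: "\<forall>g\<in>carrier G. g [^] p = \<one>"
    and x: "x \<in> carrier G" "x \<noteq> \<one>"
  shows "card (cyclicizer G x) \<le> p"
proof -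
  have ordp: "ord g = p" if "g \<in> carrier G" "g \<noteq> \<one>" for g
  proof -
    have "ord g dvd p" using all that pow_eq_id by blast
    then have "ord g = 1 \<or> ord g = p" using p prime_nat_iff by blast
    then show ?thesis using that ord_eq_1 by blast
  qed
  have "cyclicizer G x \<subseteq> generate G {x}"
  proof
    fix y assume y: "y \<in> cyclicizer G x"
    then obtain c where c: "c \<in> carrier G" "x \<in> generate G {c}" "y \<in> generate G {c}"
      using IC_sub x by blast
    have c1: "c \<noteq> \<one>" using c x gen_one by auto
    have sub: "generate G {x} \<subseteq> generate G {c}"
      using gen_sub[OF generate_is_subgroup] c by auto
    have "card (generate G {x}) = card (generate G {c})"
      using card_gen ordp c c1 x by simp
    then have "generate G {x} = generate G {c}"
      using sub card_subset_eq fin gen_carrier[OF c(1)] finite_subset by metis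
    then show "y \<in> generate G {x}" using c by simp
  qed
  then have "card (cyclicizer G x) \<le> card (generate G {x})"
    using card_mono fin gen_carrier x finite_subset by metis
  also have "\<dots> = p" using card_gen ordp x by simp
  finally show ?thesis .
qed

end



context group begin

lemma key_H:
  assumes p: "Factorial_Ring.prime (p::nat)" and h: "h \<in> carrier G" and oh: "ord h = p ^ \<alpha>" and a1: "\<alpha> \<ge> 1"
    and w: "w \<in> generate G {h}" "w \<noteq> \<one>"
  shows "h [^] (p ^ (\<alpha> - 1)) \<in> generate G {w}"
proof -
  obtain a :: int where a: "w = h [^] a" using w generate_pow[OF h] by auto
  have wG: "w \<in> carrier G" using a h by simp
  have "h [^] a \<noteq> \<one>" using w(2) a by simp
  then have "\<not> int (ord h) dvd a" using int_pow_eq_id[OF h, of a] by blast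
  then have nd: "\<not> int (p ^ \<alpha>) dvd a" using oh by simp
  obtain u v where uv: "u * a + v * int (p ^ \<alpha>) = gcd a (int (p ^ \<alpha>))" using bezout_int by blast
  define d where "d = gcd (nat \<bar>a\<bar>) (p ^ \<alpha>)"
  have dd: "gcd a (int (p ^ \<alpha>)) = int d" unfolding d_def by (subst gcd_int_def) (metis nat_int abs_of_nonneg of_nat_0_le_iff)
  have "d dvd p ^ \<alpha>" unfolding d_def by (rule gcd_dvd2)
  then obtain i where i: "i \<le> \<alpha>" "d = p ^ i" using divides_primepow_nat[OF p] by blast
  have "i \<noteq> \<alpha>"
  proof
    assume "i = \<alpha>"
    then have "p ^ \<alpha> dvd nat \<bar>a\<bar>" using i gcd_dvd1[of "nat \<bar>a\<bar>" "p ^ \<alpha>"] unfolding d_def by simp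
    then have "int (p ^ \<alpha>) dvd int (nat \<bar>a\<bar>)" by (simp only: int_dvd_int_iff)
    then have "int (p ^ \<alpha>) dvd a" by simp
    then show False using nd by simp
  qed
  then have "i \<le> \<alpha> - 1" using i by simp
  then have "d dvd p ^ (\<alpha> - 1)" using i by (simp add: le_imp_power_dvd)
  then obtain q where q: "p ^ (\<alpha> - 1) = d * q" by (elim dvdE)
  have eq: "h [^] (int (p ^ (\<alpha> - 1))) = w [^] (u * int q)"
  proof -
    have "w [^] (u * int q) = h [^] (a * (u * int q))" unfolding a using h by (simp add: int_pow_pow)
    moreover have "h [^] (int (p ^ (\<alpha> - 1))) = h [^] (a * (u * int q))"
    proof -
      have "a * (u * int q) - int (p ^ (\<alpha> - 1)) = int (p ^ \<alpha>) * (- v * int q)"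
      proof -
        have "int (p ^ (\<alpha> - 1)) = (u * a + v * int (p ^ \<alpha>)) * int q"
          using q uv dd by simp
        then show ?thesis by (simp add: algebra_simps)
      qed
      then have "int (ord h) dvd a * (u * int q) - int (p ^ (\<alpha> - 1))" using oh by simp
      then show ?thesis using int_pow_eq[OF h] by blast
    qed
    ultimately show ?thesis by simp
  qed
  have "h [^] (p ^ (\<alpha> - 1)) = w [^] (u * int q)" using eq int_pow_int[of G h "p ^ (\<alpha> - 1)"] by simp
  then show ?thesis using gen_int_pow[OF wG] by simp
qed

end




lemma iso_inv_general:
  assumes "h \<in> iso G H" and cl: "\<forall>a\<in>carrier G. \<forall>b\<in>carrier G. a \<otimes>\<^bsub>G\<^esub> b \<in> carrier G"
  shows "inv_into (carrier G) h \<in> iso H G"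
proof -
  have h: "h \<in> hom G H" "bij_betw h (carrier G) (carrier H)"
    using assms by (auto simp add: iso_def)
  then have HG: "bij_betw (inv_into (carrier G) h) (carrier H) (carrier G)"
    by (simp add: bij_betw_inv_into)
  have "inv_into (carrier G) h \<in> hom H G"
    unfolding hom_def
  proof safe
    show *: "\<And>x. x \<in> carrier H \<Longrightarrow> inv_into (carrier G) h x \<in> carrier G"
      by (meson HG bij_betwE)
    show "inv_into (carrier G) h (x \<otimes>\<^bsub>H\<^esub> y) = inv_into (carrier G) h x \<otimes>\<^bsub>G\<^esub> inv_into (carrier G) h y"
      if "x \<in> carrier H" "y \<in> carrier H" for x y
    proof (rule inv_into_f_eq)
      show "inj_on h (carrier G)"
        using bij_betw_def h(2) by blast
      have "inv_into (carrier G) h x \<in> carrier G" "inv_into (carrier G) h y \<in> carrier G"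
        using * that by auto
      moreover have "h (inv_into (carrier G) h x) = x" "h (inv_into (carrier G) h y) = y"
        using h(2) that by (auto simp: bij_betw_inv_into_right)
      moreover have "\<forall>a\<in>carrier G. \<forall>b\<in>carrier G. h (a \<otimes>\<^bsub>G\<^esub> b) = h a \<otimes>\<^bsub>H\<^esub> h b"
        using h(1) unfolding hom_def by auto
      moreover note cl
      ultimately show "inv_into (carrier G) h x \<otimes>\<^bsub>G\<^esub> inv_into (carrier G) h y \<in> carrier G"
        "h (inv_into (carrier G) h x \<otimes>\<^bsub>G\<^esub> inv_into (carrier G) h y) = x \<otimes>\<^bsub>H\<^esub> y"
        by auto
    qed
  qed
  then show ?thesis
    by (simp add: Group.iso_def bij_betw_inv_into h)
qed

lemma dihedral_mult:
  "(a, s) \<otimes>\<^bsub>dihedral_group n\<^esub> (b, t) = ((if s then a + n - b else a + b) mod n, s \<noteq> t)"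
  by (simp add: dihedral_group_def)

lemma dihedral_carrier: "carrier (dihedral_group n) = {0..<n} \<times> UNIV"
  by (simp add: dihedral_group_def)

context group begin

lemma dihedral_bound:
  assumes fin: "finite (carrier G)" and phi: "\<phi> \<in> iso G (dihedral_group n)" and n2: "2 \<le> n"
    and x: "x \<in> carrier G" "x \<noteq> \<one>"
  shows "card (cyclicizer G x) \<le> n"
proof -
  let ?D = "dihedral_group n"
  have hom: "\<And>a b. a \<in> carrier G \<Longrightarrow> b \<in> carrier G \<Longrightarrow> \<phi> (a \<otimes> b) = \<phi> a \<otimes>\<^bsub>?D\<^esub> \<phi> b"
    and into: "\<And>a. a \<in> carrier G \<Longrightarrow> \<phi> a \<in> carrier ?D"
    and inj: "inj_on \<phi> (carrier G)"
    using phi unfolding iso_def hom_def bij_betw_def by auto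
  have M: "\<phi> (a \<otimes> b) = ((if snd (\<phi> a) then fst (\<phi> a) + n - fst (\<phi> b) else fst (\<phi> a) + fst (\<phi> b)) mod n,
              snd (\<phi> a) \<noteq> snd (\<phi> b))" if "a \<in> carrier G" "b \<in> carrier G" for a b
    using hom[OF that] by (cases "\<phi> a", cases "\<phi> b") (simp add: dihedral_group_def)
  have lt: "fst (\<phi> a) < n" if "a \<in> carrier G" for a
    using into[OF that] by (auto simp: dihedral_carrier mem_Times_iff)
  have one1: "snd (\<phi> \<one>) = False" using M[of \<one> \<one>] by (simp add: prod_eq_iff)
  have one2: "fst (\<phi> \<one>) = 0"
  proof -
    let ?f = "fst (\<phi> \<one>)"
    have "?f = (?f + ?f) mod n" using M[of \<one> \<one>] one1 by (simp add: prod_eq_iff)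
    moreover have "?f < n" using lt by simp
    ultimately show ?thesis
    proof (cases "?f + ?f < n")
      case False
      assume a1: "?f = (?f + ?f) mod n" and a2: "?f < n"
      have "(?f + ?f) mod n = (?f + ?f - n) mod n" using False by (simp add: mod_if)
      also have "\<dots> = ?f + ?f - n" using a2 by simp
      finally show ?thesis using a1 a2 by simp
    qed simp
  qed
  define R where "R = {g \<in> carrier G. \<not> snd (\<phi> g)}"
  have subR: "subgroup R G"
  proof (rule subgroupI)
    show "R \<subseteq> carrier G" unfolding R_def by auto
    show "R \<noteq> {}" using one1 unfolding R_def by auto
    show "inv a \<in> R" if "a \<in> R" for a
    proof -
      have "snd (\<phi> (a \<otimes> inv a)) = False" using one1 that R_def by simp
      then show ?thesis using M[of a "inv a"] that unfolding R_def by auto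
    qed
    show "a \<otimes> b \<in> R" if "a \<in> R" "b \<in> R" for a b
      using M[of a b] that unfolding R_def by auto
  qed
  have cardR: "card R \<le> n"
  proof -
    have "\<phi> ` R \<subseteq> {0..<n} \<times> {False}"
      unfolding image_subset_iff R_def using lt by (simp add: mem_Times_iff)
    then have "card (\<phi> ` R) \<le> card ({0..<n} \<times> {False})" by (intro card_mono) auto
    moreover have "inj_on \<phi> R" using inj unfolding R_def by (rule inj_on_subset) auto
    ultimately show ?thesis by (simp add: card_image card_cartesian_product)
  qed
  have sq: "g \<otimes> g = \<one>" if "g \<in> carrier G" "g \<notin> R" for g
  proof -
    have s: "snd (\<phi> g)" using that R_def by auto
    have "\<phi> (g \<otimes> g) = (0, False)" using M[OF that(1) that(1)] s lt[OF that(1)] by simp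
    also have "\<dots> = \<phi> \<one>" using one1 one2 by (metis prod.collapse)
    finally show ?thesis using inj that(1) by (simp add: inj_on_def)
  qed
  have two: "generate G {c} \<subseteq> {\<one>, c}" if "c \<in> carrier G" "c \<otimes> c = \<one>" for c
  proof (rule gen_sub)
    have ic: "inv c = c" using inv_equality that by blast
    show "subgroup {\<one>, c} G"
      by (rule subgroupI) (use that ic in auto)
  qed auto
  have main: "cyclicizer G x \<subseteq> (if x \<in> R then R else {\<one>, x})"
  proof
    fix y assume y: "y \<in> cyclicizer G x"
    then obtain c where c: "c \<in> carrier G" "x \<in> generate G {c}" "y \<in> generate G {c}"
      using IC_sub x by blast
    show "y \<in> (if x \<in> R then R else {\<one>, x})"
    proof (cases "c \<in> R")
      case True
      then have "generate G {c} \<subseteq> R" using gen_sub subR by blast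
      then show ?thesis using c by auto
    next
      case False
      then have "generate G {c} \<subseteq> {\<one>, c}" using two sq c by blast
      then have "x = c" "y \<in> {\<one>, c}" using c x by auto
      then show ?thesis using False by auto
    qed
  qed
  show ?thesis
  proof (cases "x \<in> R")
    case True
    then have "cyclicizer G x \<subseteq> R" using main by simp
    then have "card (cyclicizer G x) \<le> card R"
      using fin subR subgroup.subset finite_subset by (metis card_mono)
    then show ?thesis using cardR by simp
  next
    case False
    then have "cyclicizer G x \<subseteq> {\<one>, x}" using main by simp
    then have "card (cyclicizer G x) \<le> card {\<one>, x}" by (intro card_mono) auto
    also have "\<dots> \<le> 2" by (simp add: card_insert_le_m1)
    finally show ?thesis using n2 by simp
  qed
qed

end



context group begin

lemma build_dihedral:
  assumes fin: "finite (carrier G)" and h: "h \<in> carrier G" and n: "ord h = n" "0 < n"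
    and cardG: "card (carrier G) = 2 * n"
    and y: "y \<in> carrier G" "y \<notin> generate G {h}" and yy: "y \<otimes> y = \<one>"
    and hy: "(h \<otimes> y) \<otimes> (h \<otimes> y) = \<one>"
  shows "G \<cong> dihedral_group n"
proof -
  let ?D = "dihedral_group n"
  have hn: "h [^] n = \<one>" using pow_ord_eq_1[OF h] n by simp
  have yy': "y \<otimes> (y \<otimes> z) = z" if "z \<in> carrier G" for z
    using yy that y by (simp flip: m_assoc)
  have yy'': "(z \<otimes> y) \<otimes> y = z" if "z \<in> carrier G" for z
    using yy that y by (simp add: m_assoc)
  have F1: "y \<otimes> h \<otimes> y = inv h"
  proof -
    have "h \<otimes> (y \<otimes> h \<otimes> y) = \<one>" using hy h y by (simp add: m_assoc)
    then have "(y \<otimes> h \<otimes> y) \<otimes> h = \<one>" using inv_comm h y by simp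
    then show ?thesis using inv_equality h y by simp
  qed
  have F2: "y \<otimes> h [^] b \<otimes> y = (inv h) [^] b" for b :: nat
  proof (induction b)
    case 0 then show ?case using yy y by simp
  next
    case (Suc b)
    have "y \<otimes> h [^] Suc b \<otimes> y = (y \<otimes> h [^] b \<otimes> y) \<otimes> (y \<otimes> h \<otimes> y)"
      using h y by (simp add: m_assoc yy')
    also have "\<dots> = (inv h) [^] Suc b" using Suc F1 by simp
    finally show ?case .
  qed
  have F3: "y \<otimes> h [^] b = h [^] (n - b) \<otimes> y" if "b \<le> n" for b :: nat
  proof -
    have "h [^] (n - b) \<otimes> h [^] b = \<one>" using that h n nat_pow_mult[of h "n - b" b] pow_ord_eq_1[OF h] by simp
    then have e: "inv (h [^] b) = h [^] (n - b)" using inv_equality h by simp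
    have "y \<otimes> h [^] b = (y \<otimes> h [^] b \<otimes> y) \<otimes> y" using h y yy by (simp add: m_assoc)
    also have "\<dots> = inv (h [^] b) \<otimes> y" using F2 nat_pow_inv h by simp
    finally show ?thesis using e by simp
  qed
  have F4: "h [^] (m mod n) = h [^] m" for m :: nat
  proof -
    have "h [^] m = h [^] (n * (m div n)) \<otimes> h [^] (m mod n)"
      using nat_pow_mult[of h "n * (m div n)" "m mod n"] h by simp
    also have "h [^] (n * (m div n)) = \<one>" using nat_pow_pow[of h n "m div n"] h hn by simp
    finally show ?thesis using h by simp
  qed
  define \<psi> where "\<psi> = (\<lambda>(a::nat, s::bool). h [^] a \<otimes> (if s then y else \<one>))"
  have psiC: "\<psi> u \<in> carrier G" for u
    unfolding \<psi>_def using h y by (cases u) auto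
  have hom: "\<psi> (u \<otimes>\<^bsub>?D\<^esub> v) = \<psi> u \<otimes> \<psi> v" if "u \<in> carrier ?D" "v \<in> carrier ?D" for u v
  proof -
    obtain a s b t where u: "u = (a, s)" and v: "v = (b, t)" by (cases u, cases v) auto
    have bn: "b < n" using that v by (simp add: dihedral_carrier)
    show ?thesis
    proof (cases s)
      case False
      have "\<psi> (u \<otimes>\<^bsub>?D\<^esub> v) = h [^] (a + b) \<otimes> (if t then y else \<one>)"
        unfolding u v \<psi>_def using False F4 by (simp add: dihedral_mult)
      also have "\<dots> = \<psi> u \<otimes> \<psi> v"
        unfolding u v \<psi>_def using False h y by (simp add: m_assoc nat_pow_mult[symmetric])
      finally show ?thesis .
    next
      case True
      have "\<psi> (u \<otimes>\<^bsub>?D\<^esub> v) = h [^] (a + (n - b)) \<otimes> (if t then \<one> else y)"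
        unfolding u v \<psi>_def using True F4 bn by (simp add: dihedral_mult)
      also have "\<dots> = h [^] a \<otimes> (y \<otimes> h [^] b) \<otimes> (if t then y else \<one>)"
        using F3[of b] bn h y yy nat_pow_mult[of h a "n - b"] by (cases t) (simp_all add: m_assoc[symmetric] yy'')
      also have "\<dots> = \<psi> u \<otimes> \<psi> v"
        unfolding u v \<psi>_def using True h y by (simp add: m_assoc)
      finally show ?thesis .
    qed
  qed
  have inj: "inj_on \<psi> (carrier ?D)"
  proof (rule inj_onI)
    fix u v assume uD: "u \<in> carrier ?D" and vD: "v \<in> carrier ?D" and e: "\<psi> u = \<psi> v"
    obtain a s b t where u: "u = (a, s)" and v: "v = (b, t)" by (cases u, cases v) auto
    have an: "a < n" "b < n" using uD vD u v by (auto simp: dihedral_carrier)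
    have notin: False if "h [^] a \<otimes> y = h [^] b" for a b :: nat
    proof -
      have "y = inv (h [^] a) \<otimes> h [^] b" using that h y
        by (metis inv_solve_left' nat_pow_closed)
      moreover have "inv (h [^] a) \<in> generate G {h}" "h [^] b \<in> generate G {h}"
        using gen_nat_pow h subgroup.m_inv_closed[OF generate_is_subgroup] by auto
      ultimately have "y \<in> generate G {h}"
        using subgroup.m_closed[OF generate_is_subgroup] h by fastforce
      then show False using y by simp
    qed
    have "s = t"
    proof (rule ccontr)
      assume "s \<noteq> t"
      then show False
        using e notin unfolding u v \<psi>_def by (cases s; cases t) (auto simp: h y, metis)
    qed
    moreover have "h [^] a = h [^] b"
      using e unfolding u v \<psi>_def `s = t` using h y by (cases t) (auto simp: r_cancel)
    then have "a = b" using ord_inj[OF h] an n unfolding inj_on_def by auto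
    ultimately show "u = v" using u v by simp
  qed
  have "card (\<psi> ` carrier ?D) = card (carrier ?D)" using inj by (rule card_image)
  also have "\<dots> = card (carrier G)" using cardG by (simp add: dihedral_carrier card_cartesian_product)
  finally have "\<psi> ` carrier ?D = carrier G"
    using psiC fin by (intro card_subset_eq) auto
  then have bij: "bij_betw \<psi> (carrier ?D) (carrier G)" using inj by (simp add: bij_betw_def)
  have "\<psi> \<in> iso ?D G" using bij hom psiC by (auto simp: iso_def hom_def)
  moreover have "\<forall>a\<in>carrier ?D. \<forall>b\<in>carrier ?D. a \<otimes>\<^bsub>?D\<^esub> b \<in> carrier ?D"
    using n by (auto simp: dihedral_group_def)
  ultimately have "inv_into (carrier ?D) \<psi> \<in> iso G ?D" by (rule iso_inv_general)
  then show ?thesis unfolding is_iso_def by blast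
qed

end



context group begin

lemma inv_cancel_left: "g \<in> carrier G \<Longrightarrow> x \<in> carrier G \<Longrightarrow> inv g \<otimes> (g \<otimes> x) = x"
  by (simp add: m_assoc[symmetric])

lemma conj_pow:
  assumes g: "g \<in> carrier G" and h: "h \<in> carrier G"
  shows "(g \<otimes> h \<otimes> inv g) [^] (m::nat) = g \<otimes> h [^] m \<otimes> inv g"
proof (induction m)
  case 0 then show ?case using g by simp
next
  case (Suc m)
  have "(g \<otimes> h \<otimes> inv g) [^] Suc m = (g \<otimes> h [^] m \<otimes> inv g) \<otimes> (g \<otimes> h \<otimes> inv g)"
    using Suc by simp
  also have "\<dots> = g \<otimes> h [^] Suc m \<otimes> inv g"
    using g h by (simp add: m_assoc inv_cancel_left)
  finally show ?case .
qed

lemma pigeon_coset: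
  assumes fin: "finite (carrier G)" and HS: "subgroup H G" and p: "0 < p"
    and idx: "card (carrier G) = p * card H" and y: "y \<in> carrier G"
  shows "\<exists>j. 1 \<le> j \<and> j \<le> p \<and> y [^] j \<in> H"
proof -
  have cH: "0 < card H"
    using idx fin y by (metis card_0_eq empty_iff gr0I mult_0_right)
  have "card (rcosets H) * card H = card (carrier G)" using lagrange[OF HS] by (simp add: order_def)
  then have cr: "card (rcosets H) = p" using idx cH by simp
  define f where "f i = H #> (y [^] (i::nat))" for i
  have fim: "f ` {0..p} \<subseteq> rcosets H"
    unfolding f_def using rcosetsI[OF subgroup.subset[OF HS]] y by auto
  have "\<not> inj_on f {0..p}"
  proof
    assume "inj_on f {0..p}"
    then have "card (f ` {0..p}) = p + 1" by (simp add: card_image)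
    moreover have "card (f ` {0..p}) \<le> p"
      using fim cr card_mono[OF _ fim] finite_subset[OF fim] by (metis card.infinite not_le_imp_less le0 less_irrefl_nat p)
    ultimately show False by simp
  qed
  then obtain i i' where ii: "i \<in> {0..p}" "i' \<in> {0..p}" "i \<noteq> i'" "f i = f i'"
    unfolding inj_on_def by blast
  have main: "y [^] (b - a) \<in> H" if "a < b" "f a = f b" for a b
  proof -
    have "y [^] b \<in> H #> y [^] a"
      using repr_independenceD[OF HS _ ] that y unfolding f_def by auto
    then obtain k where k: "k \<in> H" "y [^] b = k \<otimes> y [^] a" unfolding r_coset_def by auto
    have kG: "k \<in> carrier G" using k HS subgroup.subset by blast
    have "y [^] (b - a) \<otimes> y [^] a = y [^] b" using nat_pow_mult[of y "b - a" a] y that by simp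
    then have "y [^] (b - a) \<otimes> y [^] a = k \<otimes> y [^] a" using k by simp
    then have "y [^] (b - a) = k" using y kG by simp
    then show ?thesis using k by simp
  qed
  show ?thesis
  proof (cases "i < i'")
    case True
    then show ?thesis using main[of i i'] ii by (intro exI[of _ "i' - i"]) auto
  next
    case False
    then have "i' < i" using ii by simp
    then show ?thesis using main[of i' i] ii by (intro exI[of _ "i - i'"]) auto
  qed
qed

end



context group begin

lemma forward:
  assumes fin: "finite (carrier G)" and p: "Factorial_Ring.prime p"
    and cardG: "card (carrier G) = p ^ (\<alpha> + 1)"
    and h: "h \<in> carrier G" and oh: "ord h = p ^ \<alpha>" and a2: "2 \<le> \<alpha>"
    and bound: "\<forall>x\<in>carrier G. x \<noteq> \<one> \<longrightarrow> card (cyclicizer G x) \<le> p ^ \<alpha>"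
  shows "p = 2 \<and> G \<cong> dihedral_group (2 ^ \<alpha>)"
proof -
  define H where "H = generate G {h}"
  have HS: "subgroup H G" unfolding H_def using generate_is_subgroup h by auto
  have cardH: "card H = p ^ \<alpha>" unfolding H_def using card_gen h oh by simp
  have p1: "1 < p" using p prime_gt_1_nat by blast
  define z where "z = h [^] (p ^ (\<alpha> - 1))"
  have zG: "z \<in> carrier G" unfolding z_def using h by simp
  have "ord z = p ^ \<alpha> div p ^ (\<alpha> - 1)"
    unfolding z_def using ord_pow[OF h] oh a2 p1 by (simp add: le_imp_power_dvd)
  also have "\<dots> = p"
  proof -
    have "p ^ \<alpha> = p ^ (\<alpha> - 1) * p" using a2 by (cases \<alpha>) (auto simp: power_Suc2)
    moreover have "p ^ (\<alpha> - 1) > 0" using p1 by simp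
    ultimately show ?thesis by simp
  qed
  finally have oz: "ord z = p" .
  have z1: "z \<noteq> \<one>" using oz ord_eq_1[OF zG] p1 by auto
  have Hsub: "H \<subseteq> cyclicizer G z"
  proof
    fix w assume w: "w \<in> H"
    have wG: "w \<in> carrier G" using w HS subgroup.subset by blast
    show "w \<in> cyclicizer G z"
    proof (cases "w = \<one>")
      case True
      then have "w \<in> generate G {z}" using generate.one by simp
      then show ?thesis using IC_intro2 zG wG by blast
    next
      case False
      then have "z \<in> generate G {w}" unfolding z_def
        using key_H[OF p h oh _ w[unfolded H_def]] a2 by simp
      then show ?thesis using IC_intro zG wG by blast
    qed
  qed
  have cycz: "cyclicizer G z = H"
  proof -
    have "card (cyclicizer G z) \<le> card H" using bound zG z1 cardH by simp
    then show ?thesis using card_seteq[OF cyc_finite[OF fin] Hsub] by simp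
  qed
  have S3: "y [^] p = \<one>" if y: "y \<in> carrier G" "y \<notin> H" for y
  proof (rule ccontr)
    assume yp: "y [^] p \<noteq> \<one>"
    have idx: "card (carrier G) = p * card H" using cardG cardH by simp
    have "\<exists>j. 1 \<le> j \<and> j \<le> p \<and> y [^] j \<in> H"
      using pigeon_coset[OF fin HS _ idx y(1)] p1 by simp
    then obtain j where j: "1 \<le> j" "j \<le> p" "y [^] j \<in> H" by blast
    have ndp: "\<not> ord y dvd p" using yp pow_eq_id y by blast
    have "ord y dvd p ^ (\<alpha> + 1)" using ord_dvd_group_order[OF y(1)] cardG by (simp add: order_def)
    then obtain k where k: "k \<le> \<alpha> + 1" "ord y = p ^ k"
      using divides_primepow_nat[OF p] by blast
    have k2: "2 \<le> k"
    proof (rule ccontr)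
      assume "\<not> 2 \<le> k"
      then have "k = 0 \<or> k = 1" by auto
      then show False using ndp k by auto
    qed
    have "p * 1 < p * p" using p1 by simp
    also have "p * p = p ^ 2" by (simp add: power2_eq_square)
    also have "\<dots> \<le> p ^ k" using k2 p1 by (simp add: power_increasing)
    finally have "j < ord y" using j k by simp
    then have yj1: "y [^] j \<noteq> \<one>"
    proof -
      assume jl: "j < ord y"
      show ?thesis
      proof
        assume "y [^] j = \<one>"
        then have "ord y dvd j" using pow_eq_id y by blast
        then have "ord y \<le> j" using j(1) by (simp add: dvd_imp_le)
        then show False using jl by simp
      qed
    qed
    have "z \<in> generate G {y [^] j}" unfolding z_def
      using key_H[OF p h oh _ j(3)[unfolded H_def] yj1] a2 by simp
    moreover have "generate G {y [^] j} \<subseteq> generate G {y}"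
      using gen_sub[OF generate_is_subgroup] gen_nat_pow y by auto
    ultimately have "y \<in> cyclicizer G z" using IC_intro zG y by blast
    then show False using cycz y by simp
  qed
  have S4: "g \<otimes> h \<otimes> inv g \<in> H" if g: "g \<in> carrier G" for g
  proof (rule ccontr)
    assume nin: "g \<otimes> h \<otimes> inv g \<notin> H"
    have "(g \<otimes> h \<otimes> inv g) [^] p = \<one>" using S3[of "g \<otimes> h \<otimes> inv g"] nin g h by blast
    then have e1: "g \<otimes> h [^] p \<otimes> inv g = \<one>" using conj_pow[OF g h, of p] by simp
    have e2: "h [^] p = inv g \<otimes> (g \<otimes> h [^] p \<otimes> inv g) \<otimes> g"
      using g h by (simp add: m_assoc inv_cancel_left)
    have "h [^] p = inv g \<otimes> \<one> \<otimes> g" using e2 unfolding e1 .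
    then have "h [^] p = \<one>" using g by simp
    then have "p ^ \<alpha> dvd p" using pow_eq_id[OF h, of p] oh by simp
    then have q1: "p ^ \<alpha> \<le> p" by (rule dvd_imp_le) (use p1 in simp)
    have q2: "p ^ 2 \<le> p ^ \<alpha>" using a2 p1 by (intro power_increasing) auto
    have q3: "p < p ^ 2" using p1 by (simp add: power2_eq_square)
    show False using q1 q2 q3 by linarith
  qed
  have cHG: "card H < card (carrier G)" using cardH cardG p1 by simp
  have fH: "finite H" using fin HS subgroup.subset finite_subset by blast
  have "\<not> carrier G \<subseteq> H"
  proof
    assume "carrier G \<subseteq> H"
    then have "card (carrier G) \<le> card H" using card_mono[OF fH] by blast
    then show False using cHG by simp
  qed
  then obtain y where y: "y \<in> carrier G" "y \<notin> H" by blast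
  have hyH: "h \<otimes> y \<notin> H"
  proof
    assume a: "h \<otimes> y \<in> H"
    have "h \<in> H" unfolding H_def by (rule gen_self)
    then have "inv h \<in> H" using subgroup.m_inv_closed[OF HS] by blast
    then have "inv h \<otimes> (h \<otimes> y) \<in> H" using subgroup.m_closed[OF HS _ a] by blast
    then show False using y h by (simp add: inv_cancel_left)
  qed
  have yp: "y [^] p = \<one>" using S3[OF y] .
  have hyp: "(h \<otimes> y) [^] p = \<one>" using S3[of "h \<otimes> y"] hyH h y by blast
  show ?thesis
  proof (cases "p = 2")
    case True
    have "y \<otimes> y = \<one>" using yp True y by (simp add: numeral_2_eq_2)
    moreover have "(h \<otimes> y) \<otimes> (h \<otimes> y) = \<one>" using hyp True y h by (simp add: numeral_2_eq_2)
    moreover have "card (carrier G) = 2 * 2 ^ \<alpha>" using cardG True by simp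
    ultimately have "G \<cong> dihedral_group (2 ^ \<alpha>)"
      using build_dihedral[OF fin h _ _ _ y(1)] y(2) oh True unfolding H_def by simp
    then show ?thesis using True by simp
  next
    case False
    have "y \<otimes> h \<otimes> inv y \<in> generate G {h}" using S4[OF y(1)] unfolding H_def .
    then obtain r :: nat where r: "y \<otimes> h \<otimes> inv y = h [^] r"
      using generate_pow_on_finite_carrier[OF fin h] by auto
    have L1: "y \<otimes> h = h [^] r \<otimes> y"
    proof -
      have "y \<otimes> h = (y \<otimes> h \<otimes> inv y) \<otimes> y" using y h by (simp add: m_assoc)
      then show ?thesis using r by simp
    qed
    have L2: "y \<otimes> h [^] m = h [^] (r * m) \<otimes> y" for m :: nat
    proof (induction m)
      case 0 then show ?case using y by simp
    next
      case (Suc m)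
      have "y \<otimes> h [^] Suc m = (y \<otimes> h [^] m) \<otimes> h" using y h by (simp add: m_assoc)
      also have "\<dots> = h [^] (r * m) \<otimes> (y \<otimes> h)" using Suc y h by (simp add: m_assoc)
      also have "\<dots> = h [^] (r * m) \<otimes> h [^] r \<otimes> y" using L1 y h by (simp add: m_assoc)
      also have "\<dots> = h [^] (r * Suc m) \<otimes> y" using h by (simp add: nat_pow_mult add.commute)
      finally show ?case .
    qed
    have L3: "y [^] j \<otimes> h [^] m = h [^] (r ^ j * m) \<otimes> y [^] j" for j m :: nat
    proof (induction j arbitrary: m)
      case 0 then show ?case using h by simp
    next
      case (Suc j)
      have "y [^] Suc j \<otimes> h [^] m = (y \<otimes> y [^] j) \<otimes> h [^] m" using nat_pow_Suc2[OF y(1), of j] by simp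
      also have "\<dots> = y \<otimes> (y [^] j \<otimes> h [^] m)" using y h by (simp add: m_assoc)
      also have "\<dots> = (y \<otimes> h [^] (r ^ j * m)) \<otimes> y [^] j" using Suc y h by (simp add: m_assoc)
      also have "\<dots> = h [^] (r * (r ^ j * m)) \<otimes> (y \<otimes> y [^] j)" using L2 y h by (simp add: m_assoc)
      also have "\<dots> = h [^] (r ^ Suc j * m) \<otimes> y [^] Suc j" using nat_pow_Suc2[OF y(1), of j] by (simp add: mult.assoc)
      finally show ?case .
    qed
    have L4: "(h \<otimes> y) [^] m = h [^] (\<Sum>j<m. r ^ j) \<otimes> y [^] m" for m :: nat
    proof (induction m)
      case 0 then show ?case using h by simp
    next
      case (Suc m)
      have "(h \<otimes> y) [^] Suc m = h [^] (\<Sum>j<m. r ^ j) \<otimes> (y [^] m \<otimes> h [^] (1::nat)) \<otimes> y"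
        using Suc h y by (simp add: m_assoc)
      also have "\<dots> = h [^] (\<Sum>j<m. r ^ j) \<otimes> h [^] (r ^ m) \<otimes> y [^] m \<otimes> y"
        using L3[of m 1] h y by (simp add: m_assoc)
      also have "\<dots> = h [^] (\<Sum>j<Suc m. r ^ j) \<otimes> y [^] Suc m"
        using h y by (simp add: m_assoc nat_pow_mult)
      finally show ?case .
    qed
    have hr: "h [^] (1::nat) = h [^] (r ^ p)"
      using L3[of p 1] yp h by simp
    have "h [^] (int 1) = h [^] (int (r ^ p))" unfolding int_pow_int by (rule hr)
    then have "int (ord h) dvd int (r ^ p) - int 1" using int_pow_eq[OF h] by blast
    then have "int (p ^ \<alpha>) dvd (int r) ^ p - 1" using oh by simp
    moreover have "int p dvd int (p ^ \<alpha>)" using a2 by (simp add: dvd_power)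
    ultimately have R: "int p dvd (int r) ^ p - 1" using dvd_trans by blast
    have "h [^] (\<Sum>j<p. r ^ j) = \<one>" using L4[of p] yp hyp h by simp
    then have "p ^ \<alpha> dvd (\<Sum>j<p. r ^ j)" using pow_eq_id[OF h, of "\<Sum>j<p. r ^ j"] oh by simp
    moreover have "p ^ 2 dvd p ^ \<alpha>" using a2 by (simp add: le_imp_power_dvd)
    ultimately have "p ^ 2 dvd (\<Sum>j<p. r ^ j)" using dvd_trans by blast
    then have "int (p ^ 2) dvd int (\<Sum>j<p. r ^ j)" by (simp only: int_dvd_int_iff)
    then have S: "(int p) ^ 2 dvd (\<Sum>j<p. (int r) ^ j)" by simp
    show ?thesis using nt_odd[OF p False S R] by simp
  qed
qed

end



theorem proposition2p7:
  fixes G (structure) and p \<alpha> :: nat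
  assumes "Factorial_Ring.prime p"
    and "group G"
    and "finite (carrier G)"
    and "card (carrier G) = p ^ (\<alpha> + 1)"
    and "\<exists>H. subgroup H G \<and> card H = p ^ \<alpha> \<and> cyclic_group (G\<lparr>carrier := H\<rparr>)"
  shows "nG G = group_exponent G \<longleftrightarrow>
           (cyclic_group G \<or> group_exponent G = p \<or>
            (p = 2 \<and> G \<cong> dihedral_group (2 ^ \<alpha>)))"
proof -
  interpret group G by (rule assms(2))
  note p = assms(1) and fin = assms(3) and cardG = assms(4)
  have p1: "1 < p" using p prime_gt_1_nat by blast
  obtain H where H: "subgroup H G" "card H = p ^ \<alpha>" "cyclic_group (G\<lparr>carrier := H\<rparr>)"
    using assms(5) by blast
  have gH: "group (G\<lparr>carrier := H\<rparr>)" using subgroup_imp_group[OF H(1)] .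
  obtain h where hH: "h \<in> H" and Hr: "H = range (\<lambda>n::int. h [^]\<^bsub>G\<lparr>carrier := H\<rparr>\<^esub> n)"
    using group.cyclic_group[OF gH] H(3) by auto
  have h: "h \<in> carrier G" using hH H(1) subgroup.subset by blast
  have Hgen: "H = generate G {h}"
  proof -
    have "range (\<lambda>n::int. h [^]\<^bsub>G\<lparr>carrier := H\<rparr>\<^esub> n) = range (\<lambda>n::int. h [^] n)"
      using int_pow_consistent[OF H(1) hH] by simp
    also have "\<dots> = generate G {h}" using generate_pow[OF h] by auto
    finally show ?thesis using Hr by simp
  qed
  have oh: "ord h = p ^ \<alpha>" using card_gen[OF h] Hgen H(2) by simp
  have ords: "\<exists>i\<le>\<alpha>+1. ord g = p ^ i" if g: "g \<in> carrier G" for g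
  proof -
    have "ord g dvd p ^ (\<alpha> + 1)" using ord_dvd_group_order[OF g] cardG by (simp add: order_def)
    then show ?thesis using divides_primepow_nat[OF p] by blast
  qed
  let ?N = "p ^ (\<alpha> + 1)"
  show ?thesis
  proof (cases "cyclic_group G")
    case True
    then obtain g where g: "g \<in> carrier G" and cg: "carrier G = range (\<lambda>n::int. g [^] n)"
      using cyclic_group by blast
    have cg2: "carrier G = generate G {g}" using cg generate_pow[OF g] by auto
    have og: "ord g = ?N" using card_gen[OF g] cg2 cardG by simp
    have g1: "g \<noteq> \<one>" using og ord_eq_1[OF g] p1
      by (metis One_nat_def one_less_power zero_less_Suc add.commute plus_1_eq_Suc less_not_refl)
    have cycall: "cyclicizer G x = carrier G" if x: "x \<in> carrier G" for x
    proof
      show "cyclicizer G x \<subseteq> carrier G" by (rule IC_carrier)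
      show "carrier G \<subseteq> cyclicizer G x"
      proof
        fix y assume y: "y \<in> carrier G"
        have "\<exists>c\<in>carrier G. generate G {x,y} = generate G {c}"
          using sub_cyclic[OF g] x y cg2 by blast
        then show "y \<in> cyclicizer G x" using IC_char[OF x y] by blast
      qed
    qed
    have e1: "group_exponent G \<le> ?N"
      using exp_le[of "order G"] pow_order_eq_1 cardG p1 by (simp add: order_def)
    have "ord g dvd group_exponent G" using ord_dvd_exp[OF fin g] .
    then have e2: "?N \<le> group_exponent G" using og exp_props(1)[OF fin] by (metis dvd_imp_le)
    have n1: "?N \<le> nG G" using nG_ge[OF fin g g1] cycall[OF g] cardG by simp
    have n2: "nG G \<le> ?N" using nG_le[OF fin, of ?N] cycall cardG g g1 by auto
    show ?thesis using e1 e2 n1 n2 True by simp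
  next
    case False
    have allp: "g [^] (p ^ \<alpha>) = \<one>" if g: "g \<in> carrier G" for g
    proof -
      obtain i where i: "i \<le> \<alpha> + 1" "ord g = p ^ i" using ords[OF g] by blast
      have "i \<noteq> \<alpha> + 1"
      proof
        assume "i = \<alpha> + 1"
        then have "card (generate G {g}) = card (carrier G)" using card_gen[OF g] i cardG by simp
        then have "generate G {g} = carrier G"
          using card_subset_eq[OF fin gen_carrier[OF g]] by simp
        moreover have "range (\<lambda>n::int. g [^] n) = generate G {g}" using generate_pow[OF g] by auto
        ultimately have "carrier G = range (\<lambda>n::int. g [^] n)" by simp
        then have "cyclic_group G" using cyclic_group g by blast
        then show False using False by simp
      qed
      then have "i \<le> \<alpha>" using i by simp
      then have "ord g dvd p ^ \<alpha>" using i by (simp add: le_imp_power_dvd)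
      then show ?thesis using pow_eq_id[OF g] by blast
    qed
    have e1: "group_exponent G \<le> p ^ \<alpha>" using exp_le[of "p ^ \<alpha>"] allp p1 by simp
    have "p ^ \<alpha> dvd group_exponent G" using ord_dvd_exp[OF fin h] oh by simp
    then have e2: "p ^ \<alpha> \<le> group_exponent G" using exp_props(1)[OF fin] by (simp add: dvd_imp_le)
    have e: "group_exponent G = p ^ \<alpha>" using e1 e2 by simp
    have a1: "1 \<le> \<alpha>"
    proof (rule ccontr)
      assume "\<not> 1 \<le> \<alpha>"
      then have a0: "\<alpha> = 0" by simp
      have "carrier G \<subseteq> {\<one>}"
      proof
        fix g assume "g \<in> carrier G"
        then show "g \<in> {\<one>}" using allp[of g] a0 by simp
      qed
      then have "card (carrier G) \<le> 1" using card_mono[of "{\<one>}"] by fastforce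
      then show False using cardG a0 p1 by simp
    qed
    have "1 < p ^ \<alpha>" using one_less_power[OF p1, of \<alpha>] a1 by simp
    then have h1: "h \<noteq> \<one>" using oh ord_eq_1[OF h] by auto
    have "H \<subseteq> cyclicizer G h"
    proof
      fix w assume "w \<in> H"
      then show "w \<in> cyclicizer G h" using IC_intro2[OF h _] Hgen gen_carrier[OF h] by blast
    qed
    then have nlow: "p ^ \<alpha> \<le> card (cyclicizer G h)"
      using card_mono[OF cyc_finite[OF fin]] H(2) by metis
    have ne: "carrier G - {\<one>} \<noteq> {}" using h h1 by blast
    have iff1: "nG G = group_exponent G \<longleftrightarrow> (\<forall>x\<in>carrier G. x \<noteq> \<one> \<longrightarrow> card (cyclicizer G x) \<le> p ^ \<alpha>)"
    proof
      assume "nG G = group_exponent G"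
      then show "\<forall>x\<in>carrier G. x \<noteq> \<one> \<longrightarrow> card (cyclicizer G x) \<le> p ^ \<alpha>"
        using nG_ge[OF fin] e by fastforce
    next
      assume b: "\<forall>x\<in>carrier G. x \<noteq> \<one> \<longrightarrow> card (cyclicizer G x) \<le> p ^ \<alpha>"
      have "nG G \<le> p ^ \<alpha>" using nG_le[OF fin ne, of "p ^ \<alpha>"] b by blast
      moreover have "p ^ \<alpha> \<le> nG G" using nlow nG_ge[OF fin h h1] by simp
      ultimately show "nG G = group_exponent G" using e by simp
    qed
    have iff2: "(\<forall>x\<in>carrier G. x \<noteq> \<one> \<longrightarrow> card (cyclicizer G x) \<le> p ^ \<alpha>) \<longleftrightarrow>
        (group_exponent G = p \<or> (p = 2 \<and> G \<cong> dihedral_group (2 ^ \<alpha>)))"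
    proof
      assume b: "\<forall>x\<in>carrier G. x \<noteq> \<one> \<longrightarrow> card (cyclicizer G x) \<le> p ^ \<alpha>"
      show "group_exponent G = p \<or> (p = 2 \<and> G \<cong> dihedral_group (2 ^ \<alpha>))"
      proof (cases "\<alpha> = 1")
        case True
        then show ?thesis using e by simp
      next
        case False
        then have "2 \<le> \<alpha>" using a1 by simp
        then show ?thesis using forward[OF fin p cardG h oh _ b] by simp
      qed
    next
      assume c: "group_exponent G = p \<or> (p = 2 \<and> G \<cong> dihedral_group (2 ^ \<alpha>))"
      show "\<forall>x\<in>carrier G. x \<noteq> \<one> \<longrightarrow> card (cyclicizer G x) \<le> p ^ \<alpha>"
      proof (cases "group_exponent G = p")
        case True
        have allp1: "\<forall>g\<in>carrier G. g [^] p = \<one>" using exp_props(2)[OF fin] True by simp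
        show ?thesis using exp_p_bound[OF fin p allp1] True e by simp
      next
        case False
        then have p2: "p = 2" and iso: "G \<cong> dihedral_group (2 ^ \<alpha>)" using c by auto
        obtain \<phi> where phi: "\<phi> \<in> iso G (dihedral_group (2 ^ \<alpha>))" using iso unfolding is_iso_def by blast
        have n2: "2 \<le> (2::nat) ^ \<alpha>" using a1
          by (metis power_one_right power_increasing one_le_numeral)
        show ?thesis using dihedral_bound[OF fin phi n2] p2 by simp
      qed
    qed
    show ?thesis using iff1 iff2 False by simp
  qed
qed


end
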